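(* Let $K(z,u)=(u-1)^2(1-zu^2)-zu^3$ and, for real $x\in(0,1/12)$, let $u_1(x)\in(1,2)$ and $u_2(x)\in(0,1)$ be the unique real roots of $u\mapsto K(x,u)$ in these intervals. Fix $\theta\in(0,2\pi)$ and let $D(\theta)=\{z\in\mathbb C:|z|<4\}\setminus\big(\{re^{\mathrm i\theta}:r\ge0\}\cup[1/12,+\infty)\big)$. Then $u_1$ and $u_2$ have analytic continuations on $D(\theta)$. Moreover, $u_2$ is analytic at $z=1/12$ with $u_2(1/12)=(-3+\sqrt{21})/2$, while for $z$ approaching $1/12$ in $D(\theta)$, \[ u_1(z)=2-\sqrt{12/7}\cdot\sqrt{1-12z}+O(1-12z). \]
   Context: $\sqrt{\cdot}$ denotes the principal branch of the square root. *)

theory Defs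
  imports "HOL-Complex_Analysis.Complex_Analysis" "HOL-Library.Landau_Symbols"
begin

definition K :: "complex \<Rightarrow> complex \<Rightarrow> complex" where
  "K z u = (u - 1)^2 * (1 - z * u^2) - z * u^3"

definition u1 :: "real \<Rightarrow> real" where
  "u1 x = (THE u. 1 < u \<and> u < 2 \<and> K (complex_of_real x) (complex_of_real u) = 0)"

definition u2 :: "real \<Rightarrow> real" where
  "u2 x = (THE u. 0 < u \<and> u < 1 \<and> K (complex_of_real x) (complex_of_real u) = 0)"

definition Dom :: "real \<Rightarrow> complex set" where
  "Dom \<theta> = ball 0 4 - ({z. \<exists>r::real. r \<ge> 0 \<and> z = complex_of_real r * cis \<theta>}
                          \<union> {z. \<exists>r::real. r \<ge> 1/12 \<and> z = complex_of_real r})"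

end

theory Submission
  imports Defs
begin


lemma K_real: "K (of_real x) (of_real u) = of_real ((u-1)^2 * (1-x * u^2) - x * u^3)"
  by (simp add: K_def)

lemma P_ident:
  fixes x u :: real
  assumes "u \<noteq> 0"
  shows "(u-1)^2 * (1-x * u^2) - x * u^3 = u^4 * (((u-1)/u^2)^2 + x * ((u-1)/u^2) - x)"
  using assms by (simp add: field_simps power2_eq_square power4_eq_xxxx) algebra

lemma u1_formula:
  fixes x :: real
  assumes x: "0 < x" "x < 1/12"
  shows "u1 x = 2/(1+sqrt(1+2 * x-2 * sqrt(x^2+4 * x)))"
proof -
  define q where "q = sqrt(x^2+4 * x)"
  define F where "F = 1+2 * x-2 * q"
  have h0: "0 \<le> x^2+4 * x" using x by (smt (verit) zero_le_power2)
  hence q2: "q^2 = x^2+4 * x" unfolding q_def by simp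
  have q0: "q \<ge> 0" unfolding q_def using h0 by simp
  have qx: "q > x" using q2 q0 x by (smt (verit) power_mono)
  have "(1+2 * x)^2 - (2 * q)^2 = 1 - 12 * x" using q2 by (simp add: power2_eq_square algebra_simps)
  hence "(2 * q)^2 < (1+2 * x)^2" using x by simp
  hence "2 * q < 1+2 * x" using x q0 by (smt (verit) power_mono)
  hence F0: "F > 0" unfolding F_def by simp
  have F1: "F < 1" unfolding F_def using qx by simp
  define sF where "sF = sqrt F"
  have sF0: "sF > 0" and sF1: "sF < 1" and sF2: "sF^2 = F" unfolding sF_def using F0 F1 by auto
  define v where "v = 2/(1+sF)"
  have P: "(1 < u \<and> u < 2 \<and> K (of_real x) (of_real u) = 0) \<longleftrightarrow> u = v" for u
  proof
    assume H: "1 < u \<and> u < 2 \<and> K (of_real x) (of_real u) = 0"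
    define s where "s = (u-1)/u^2"
    have s0: "s > 0" unfolding s_def using H by simp
    have "(u-1)^2 * (1-x * u^2) - x * u^3 = 0" using H K_real[of x u] by (metis of_real_eq_0_iff)
    hence "u^4 * (s^2 + x * s - x) = 0" using H P_ident[of u x] unfolding s_def by simp
    hence eq: "s^2 + x * s - x = 0" using H by simp
    hence "(2 * s+x)^2 = q^2" using q2 by (simp add: power2_eq_square algebra_simps)
    hence qs: "2 * s+x = q" using s0 x q0 by (smt (verit) power2_eq_iff)
    have "(2/u - 1)^2 = 1 - 4 * s" unfolding s_def using H by (simp add: field_simps power2_eq_square)
    also have "\<dots> = F" unfolding F_def using qs by simp
    finally have "(2/u-1)^2 = sF^2" using sF2 by simp
    moreover have "2/u - 1 > 0" using H by (simp add: field_simps)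
    ultimately have "2/u - 1 = sF" using sF0 by (smt (verit) power2_eq_iff)
    hence "u * (1+sF) = 2" using H by (simp add: field_simps)
    thus "u = v" unfolding v_def using sF0 by (simp add: eq_divide_eq)
  next
    assume "u = v"
    have v12: "1 < v" "v < 2" unfolding v_def using sF0 sF1 by (simp_all add: field_simps)
    have sv: "(v-1)/v^2 = (q-x)/2" unfolding v_def using sF0 sF2 F_def
      by (simp add: field_simps power2_eq_square) algebra
    have "((v-1)/v^2)^2 + x * ((v-1)/v^2) - x = 0" unfolding sv using q2
      by (simp add: field_simps power2_eq_square)
    hence "K (of_real x) (of_real v) = 0" using P_ident[of v x] K_real[of x v] v12 by simp
    thus "1 < u \<and> u < 2 \<and> K (of_real x) (of_real u) = 0" using v12 \<open>u = v\<close> by simp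
  qed
  have "u1 x = v" unfolding u1_def using P by simp
  thus ?thesis unfolding v_def sF_def F_def q_def .
qed

lemma u2_formula:
  fixes x :: real
  assumes x: "0 < x" "x < 1/12"
  shows "u2 x = 2/(1+sqrt(1+2 * x+2 * sqrt(x^2+4 * x)))"
proof -
  define q where "q = sqrt(x^2+4 * x)"
  define F where "F = 1+2 * x+2 * q"
  have h0: "0 \<le> x^2+4 * x" using x by (smt (verit) zero_le_power2)
  hence q2: "q^2 = x^2+4 * x" unfolding q_def by simp
  have q0: "q \<ge> 0" unfolding q_def using h0 by simp
  have qx: "q > x" using q2 q0 x by (smt (verit) power_mono)
  have F1: "F > 1" unfolding F_def using qx x by simp
  define sF where "sF = sqrt F"
  have sF0: "sF > 0" and sF1: "sF > 1" and sF2: "sF^2 = F" unfolding sF_def using F1 by auto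
  define v where "v = 2/(1+sF)"
  have P: "(0 < u \<and> u < 1 \<and> K (of_real x) (of_real u) = 0) \<longleftrightarrow> u = v" for u
  proof
    assume H: "0 < u \<and> u < 1 \<and> K (of_real x) (of_real u) = 0"
    define s where "s = (u-1)/u^2"
    have s0: "s < 0" unfolding s_def using H by (simp add: divide_neg_pos)
    have "(u-1)^2 * (1-x * u^2) - x * u^3 = 0" using H K_real[of x u] by (metis of_real_eq_0_iff)
    hence "u^4 * (s^2 + x * s - x) = 0" using H P_ident[of u x] unfolding s_def by simp
    hence eq: "s^2 + x * s - x = 0" using H by simp
    hence "(2 * s+x)^2 = q^2" using q2 by (simp add: power2_eq_square algebra_simps)
    hence qs: "2 * s+x = -q" using s0 x q0 qx by (smt (verit) power2_eq_iff)
    have "(2/u - 1)^2 = 1 - 4 * s" unfolding s_def using H by (simp add: field_simps power2_eq_square)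
    also have "\<dots> = F" unfolding F_def using qs by simp
    finally have "(2/u-1)^2 = sF^2" using sF2 by simp
    moreover have "2/u - 1 > 0" using H by (simp add: field_simps)
    ultimately have "2/u - 1 = sF" using sF0 by (smt (verit) power2_eq_iff)
    hence "u * (1+sF) = 2" using H by (simp add: field_simps)
    thus "u = v" unfolding v_def using sF0 by (simp add: eq_divide_eq)
  next
    assume "u = v"
    have v12: "0 < v" "v < 1" unfolding v_def using sF0 sF1 by (simp_all add: field_simps)
    have sv: "(v-1)/v^2 = (-q-x)/2" unfolding v_def using sF0 sF2 F_def
      by (simp add: field_simps power2_eq_square)
    have "((v-1)/v^2)^2 + x * ((v-1)/v^2) - x = 0" unfolding sv using q2
      by (simp add: field_simps power2_eq_square)
    hence "K (of_real x) (of_real v) = 0" using P_ident[of v x] K_real[of x v] v12 by simp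
    thus "0 < u \<and> u < 1 \<and> K (of_real x) (of_real u) = 0" using v12 \<open>u = v\<close> by simp
  qed
  have "u2 x = v" unfolding u2_def using P by simp
  thus ?thesis unfolding v_def sF_def F_def q_def .
qed

lemma est_lemma:
  fixes z \<rho> A B :: complex and c :: real
  assumes r2: "\<rho>^2 = z^2 + 4 * z" and rr: "Re \<rho> \<ge> 0" and rz: "Re z \<ge> 0"
    and zc: "cmod (z - 1/12) \<le> 1/24"
    and A2: "A^2 = 1 + 2 * z - 2 * \<rho>" and B2: "B^2 = 1 + 2 * z + 2 * \<rho>"
    and rA: "Re A \<ge> 0" and rB: "Re B \<ge> 0" and c: "c = sqrt (3/7)"
  shows "cmod (2/(1+A) - (2 - 2 * of_real c * (A * B))) \<le> 4 * cmod (1 - 12 * z)"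
proof -
  define w where "w = 1 - 12 * z"
  define p where "p = 1 + 2 * z + 2 * \<rho>"
  have wz: "cmod w = 12 * cmod (z - 1/12)"
  proof -
    have "cmod w = cmod (-12 * (z - 1/12))" unfolding w_def by (simp add: algebra_simps)
    also have "\<dots> = 12 * cmod (z - 1/12)" by (simp only: norm_mult) simp
    finally show ?thesis .
  qed
  have Rep: "Re p \<ge> 1" unfolding p_def using rz rr by simp
  hence p1: "cmod p \<ge> 1" by (smt (verit) complex_Re_le_cmod)
  have fp: "(1 + 2 * z - 2 * \<rho>) * p = w" unfolding p_def w_def
  proof -
    have "(1 + 2 * z - 2 * \<rho>) * (1 + 2 * z + 2 * \<rho>) = (1 + 2 * z)^2 - 4 * \<rho>^2"
      by (simp add: power2_eq_square algebra_simps)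
    also have "\<dots> = 1 - 12 * z" unfolding r2 by (simp add: power2_eq_square algebra_simps)
    finally show "(1 + 2 * z - 2 * \<rho>) * (1 + 2 * z + 2 * \<rho>) = 1 - 12 * z" .
  qed
  have nA2: "cmod A ^ 2 \<le> cmod w"
  proof -
    have "cmod A ^ 2 = cmod (1 + 2 * z - 2 * \<rho>)" using A2 by (metis norm_power)
    also have "\<dots> \<le> cmod (1 + 2 * z - 2 * \<rho>) * cmod p" using p1
      by (simp add: mult_le_cancel_left1)
    also have "\<dots> = cmod w" using fp by (metis norm_mult)
    finally show ?thesis .
  qed
  have w12: "cmod w \<le> 1/2" using wz zc by simp
  have nA: "cmod A \<le> 1"
  proof -
    have "cmod A ^ 2 \<le> 1" using nA2 w12 by simp
    thus ?thesis by (simp add: power_le_one_iff)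
  qed
  have A1: "cmod (1 + A) \<ge> 1" using rA by (smt (verit) complex_Re_le_cmod plus_complex.sel(1) one_complex.sel(1))
  have cB1: "cmod (of_real c * B + 1) \<ge> 1"
  proof -
    have "c \<ge> 0" using c by simp
    hence "Re (of_real c * B + 1) \<ge> 1" using rB by simp
    thus ?thesis by (smt (verit) complex_Re_le_cmod)
  qed
  have c2: "c^2 = 3/7" using c by simp
  have rho_f: "(\<rho> - 7/12) * (\<rho> + 7/12) = (z - 1/12) * (z + 49/12)"
  proof -
    have "(\<rho> - 7/12) * (\<rho> + 7/12) = \<rho>^2 - 49/144" by (simp add: power2_eq_square algebra_simps)
    thus ?thesis unfolding r2 by (simp add: power2_eq_square field_simps)
  qed
  have rp: "cmod (\<rho> + 7/12) \<ge> 7/12"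
  proof -
    have "Re (\<rho> + 7/12) \<ge> 7/12" using rr by simp
    thus ?thesis by (smt (verit) complex_Re_le_cmod)
  qed
  have z49: "cmod (z + 49/12) \<le> 5"
  proof -
    have "cmod (z + 49/12) = cmod ((z - 1/12) + 50/12)" by (simp add: algebra_simps)
    also have "\<dots> \<le> cmod (z - 1/12) + cmod (50/12::complex)" by (rule norm_triangle_ineq)
    also have "\<dots> \<le> 5" using zc by simp
    finally show ?thesis .
  qed
  have nrho: "cmod (\<rho> - 7/12) \<le> 9 * cmod (z - 1/12)"
  proof -
    have "cmod (\<rho> - 7/12) * cmod (\<rho> + 7/12) = cmod (z - 1/12) * cmod (z + 49/12)"
      using rho_f by (metis norm_mult)
    also have "\<dots> \<le> cmod (z - 1/12) * 5" using z49 by (simp add: mult_left_mono)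
    finally have h: "cmod (\<rho> - 7/12) * cmod (\<rho> + 7/12) \<le> cmod (z - 1/12) * 5" .
    have "cmod (\<rho> - 7/12) * (7/12) \<le> cmod (\<rho> - 7/12) * cmod (\<rho> + 7/12)"
      using rp by (intro mult_left_mono) auto
    with h have "cmod (\<rho> - 7/12) * (7/12) \<le> cmod (z - 1/12) * 5" by linarith
    thus ?thesis using norm_ge_zero[of "z - 1/12"] by linarith
  qed
  have np: "cmod (p - 7/3) \<le> 20 * cmod (z - 1/12)"
  proof -
    have "p - 7/3 = 2 * (z - 1/12) + 2 * (\<rho> - 7/12)" unfolding p_def by (simp add: algebra_simps)
    hence "cmod (p - 7/3) \<le> cmod (2 * (z - 1/12)) + cmod (2 * (\<rho> - 7/12))"
      by (metis norm_triangle_ineq)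
    also have "\<dots> = 2 * cmod (z - 1/12) + 2 * cmod (\<rho> - 7/12)" by (simp only: norm_mult) simp
    finally show ?thesis using nrho by simp
  qed
  have ncB: "cmod (of_real c * B - 1) \<le> cmod w"
  proof -
    have "(of_real c * B - 1) * (of_real c * B + 1) = of_real (c^2) * B^2 - 1"
      by (simp add: power2_eq_square algebra_simps)
    also have "\<dots> = 3/7 * (p - 7/3)" unfolding c2 B2 p_def by (simp add: algebra_simps)
    finally have e: "(of_real c * B - 1) * (of_real c * B + 1) = 3/7 * (p - 7/3)" .
    have "cmod (of_real c * B - 1) \<le> cmod (of_real c * B - 1) * cmod (of_real c * B + 1)"
      using cB1 by (simp add: mult_le_cancel_left1)
    also have "\<dots> = 3/7 * cmod (p - 7/3)" using e by (metis norm_mult norm_divide norm_numeral norm_one times_divide_eq_left mult_1)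
    also have "\<dots> \<le> 3/7 * (20 * cmod (z - 1/12))" using np by simp
    also have "\<dots> \<le> cmod w" using wz by simp
    finally show ?thesis .
  qed
  have E: "2/(1+A) - (2 - 2 * of_real c * (A * B)) = 2 * A * (of_real c * B - 1) + 2 * A^2 / (1 + A)"
  proof -
    have "1 + A \<noteq> 0" using A1 by auto
    thus ?thesis by (simp add: field_simps power2_eq_square)
  qed
  have t1: "cmod (2 * A * (of_real c * B - 1)) \<le> 2 * cmod w"
  proof -
    have "cmod (2 * A * (of_real c * B - 1)) = 2 * cmod A * cmod (of_real c * B - 1)" by (simp add: norm_mult)
    also have "\<dots> \<le> 2 * 1 * cmod w" using nA ncB by (intro mult_mono) auto
    finally show ?thesis by simp
  qed
  have t2: "cmod (2 * A^2 / (1 + A)) \<le> 2 * cmod w"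
  proof -
    have "cmod (2 * A^2 / (1 + A)) = 2 * cmod A ^ 2 / cmod (1 + A)" by (simp add: norm_mult norm_divide norm_power)
    also have "\<dots> \<le> 2 * cmod A ^ 2" using A1 by (simp add: divide_le_eq mult_le_cancel_left1) 
    also have "\<dots> \<le> 2 * cmod w" using nA2 by simp
    finally show ?thesis .
  qed
  have "cmod (2/(1+A) - (2 - 2 * of_real c * (A * B))) \<le> cmod (2 * A * (of_real c * B - 1)) + cmod (2 * A^2 / (1 + A))"
    unfolding E by (rule norm_triangle_ineq)
  thus ?thesis using t1 t2 unfolding w_def by simp
qed

definition ray :: "real \<Rightarrow> complex set" where
  "ray \<theta> = {z. \<exists>r::real. r \<ge> 0 \<and> z = complex_of_real r * cis \<theta>}"
definition slit :: "complex set" where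
  "slit = {z. \<exists>r::real. r \<ge> 1/12 \<and> z = complex_of_real r}"

lemma Dom_eq: "Dom \<theta> = ball 0 4 - (ray \<theta> \<union> slit)"
  by (simp add: Dom_def ray_def slit_def)

definition Sq :: "real \<Rightarrow> complex \<Rightarrow> complex" where
  "Sq \<theta> z = cis ((\<theta> - pi)/2) * csqrt (- z * cis (-\<theta>))"
definition RR :: "real \<Rightarrow> complex \<Rightarrow> complex" where
  "RR \<theta> z = Sq \<theta> z * csqrt (z + 4)"
definition U1f :: "real \<Rightarrow> complex \<Rightarrow> complex" where
  "U1f \<theta> z = 2 / (1 + csqrt (1 + 2 * z - 2 * RR \<theta> z))"
definition U2f :: "real \<Rightarrow> complex \<Rightarrow> complex" where
  "U2f \<theta> z = 2 / (1 + csqrt (1 + 2 * z + 2 * RR \<theta> z))"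

lemma ray_nonpos:
  assumes "z \<in> - ray \<theta>"
  shows "- z * cis (-\<theta>) \<notin> \<real>\<^sub>\<le>\<^sub>0"
proof
  assume "- z * cis (-\<theta>) \<in> \<real>\<^sub>\<le>\<^sub>0"
  then obtain t where t: "- z * cis (-\<theta>) = of_real t" "t \<le> 0" by (rule nonpos_Reals_cases)
  have e1: "z = - z * cis (-\<theta>) * (- cis \<theta>)" by (simp add: cis_mult)
  have zz: "z = complex_of_real (-t) * cis \<theta>" using e1 unfolding t(1) by simp
  have "-t \<ge> 0" using t by simp
  hence "z \<in> ray \<theta>" unfolding ray_def using zz by blast
  thus False using assms by simp
qed

lemma Sq_sq: "(Sq \<theta> z)^2 = z"
proof -
  have "(Sq \<theta> z)^2 = cis ((\<theta> - pi)/2) ^ 2 * (- z * cis (-\<theta>))" by (simp add: Sq_def power_mult_distrib)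
  also have "cis ((\<theta> - pi)/2) ^ 2 = cis ((\<theta> - pi)/2 + (\<theta> - pi)/2)" by (simp add: power2_eq_square cis_mult)
  also have "(\<theta> - pi)/2 + (\<theta> - pi)/2 = \<theta> - pi" by simp
  also have "cis (\<theta> - pi) * (- z * cis (-\<theta>)) = - z * (cis (\<theta> - pi) * cis (-\<theta>))" by simp
  also have "cis (\<theta> - pi) * cis (-\<theta>) = -1" by (simp add: cis_mult complex_eq_iff)
  finally show ?thesis by simp
qed

lemma Sq_pos:
  assumes th: "0 < \<theta>" "\<theta> < 2 * pi" and x: "x > 0"
  shows "Sq \<theta> (of_real x) = of_real (sqrt x)"
proof -
  have "csqrt (- of_real x * cis (-\<theta>)) = of_real (sqrt x) * cis ((pi - \<theta>)/2)"
  proof (rule csqrt_unique)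
    have a2: "(complex_of_real (sqrt x))^2 = of_real x" using x by (metis of_real_power real_sqrt_pow2 less_imp_le)
    have c2: "(cis ((pi - \<theta>)/2))^2 = cis ((pi - \<theta>)/2 + (pi - \<theta>)/2)" by (simp add: power2_eq_square cis_mult)
    have "(of_real (sqrt x) * cis ((pi - \<theta>)/2))^2 = of_real x * cis ((pi - \<theta>)/2 + (pi - \<theta>)/2)"
      by (simp only: power_mult_distrib a2 c2)
    also have "(pi - \<theta>)/2 + (pi - \<theta>)/2 = pi - \<theta>" by simp
    also have "cis (pi - \<theta>) = - cis (-\<theta>)" by (simp add: complex_eq_iff)
    finally show "(of_real (sqrt x) * cis ((pi - \<theta>)/2))^2 = - of_real x * cis (-\<theta>)" by simp
    have "cos ((pi - \<theta>)/2) > 0" using th by (intro cos_gt_zero_pi) auto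
    hence "Re (of_real (sqrt x) * cis ((pi - \<theta>)/2)) > 0" using x by simp
    thus "0 < Re (of_real (sqrt x) * cis ((pi - \<theta>)/2)) \<or>
      Re (of_real (sqrt x) * cis ((pi - \<theta>)/2)) = 0 \<and> 0 \<le> Im (of_real (sqrt x) * cis ((pi - \<theta>)/2))" by simp
  qed
  hence "Sq \<theta> (of_real x) = of_real (sqrt x) * (cis ((\<theta> - pi)/2) * cis ((pi - \<theta>)/2))"
    unfolding Sq_def by simp
  also have "cis ((\<theta> - pi)/2) * cis ((pi - \<theta>)/2) = 1"
  proof -
    have "(\<theta> - pi)/2 + (pi - \<theta>)/2 = 0" by (simp add: field_simps)
    thus ?thesis by (simp add: cis_mult)
  qed
  finally show ?thesis by simp
qed

lemma Dom_sub: "z \<in> Dom \<theta> \<Longrightarrow> z \<notin> ray \<theta> \<and> z \<notin> slit \<and> cmod z < 4"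
  by (simp add: Dom_eq)

lemma open_Dom_aux: "z \<in> Dom \<theta> \<Longrightarrow> z + 4 \<notin> \<real>\<^sub>\<le>\<^sub>0"
proof
  assume z: "z \<in> Dom \<theta>" and "z + 4 \<in> \<real>\<^sub>\<le>\<^sub>0"
  hence "Re z \<le> -4" by (simp add: complex_nonpos_Reals_iff)
  moreover have "cmod z < 4" using z Dom_sub by blast
  ultimately show False using abs_Re_le_cmod[of z] by linarith
qed

lemma Sq_holo: "Sq \<theta> holomorphic_on - ray \<theta>"
proof -
  have "(\<lambda>z. csqrt (- z * cis (-\<theta>))) holomorphic_on - ray \<theta>"
    apply (rule holomorphic_on_csqrt')
     apply (intro holomorphic_intros)
    apply (rule ray_nonpos, assumption)
    done
  thus ?thesis unfolding Sq_def by (rule holomorphic_on_mult[OF holomorphic_on_const])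
qed

lemma RR_holo: "RR \<theta> holomorphic_on Dom \<theta>"
proof -
  have "Dom \<theta> \<subseteq> - ray \<theta>" using Dom_sub by blast
  hence "Sq \<theta> holomorphic_on Dom \<theta>" using Sq_holo holomorphic_on_subset by blast
  moreover have "(\<lambda>z. csqrt (z + 4)) holomorphic_on Dom \<theta>"
    apply (rule holomorphic_on_csqrt')
     apply (intro holomorphic_intros)
    apply (rule open_Dom_aux, assumption)
    done
  ultimately show ?thesis unfolding RR_def by (rule holomorphic_on_mult)
qed

lemma RR_sq: "(RR \<theta> z)^2 = z^2 + 4 * z"
  unfolding RR_def power_mult_distrib Sq_sq power2_csqrt by (simp add: power2_eq_square algebra_simps)

lemma RR_pos:
  assumes th: "0 < \<theta>" "\<theta> < 2 * pi" and x: "x > 0"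
  shows "RR \<theta> (of_real x) = of_real (sqrt (x^2 + 4 * x))"
proof -
  have "RR \<theta> (of_real x) = of_real (sqrt x) * of_real (sqrt (x + 4))"
    unfolding RR_def Sq_pos[OF th x] using x csqrt_of_real[of "x+4"] by simp
  also have "\<dots> = of_real (sqrt (x * (x + 4)))" by (simp add: real_sqrt_mult)
  finally show ?thesis by (simp add: power2_eq_square algebra_simps)
qed

lemma key_nonpos:
  assumes z: "z \<in> Dom \<theta>" and r2: "\<rho>^2 = z^2 + 4 * z"
  shows "1 + 2 * z - 2 * \<rho> \<notin> \<real>\<^sub>\<le>\<^sub>0"
proof
  assume "1 + 2 * z - 2 * \<rho> \<in> \<real>\<^sub>\<le>\<^sub>0"
  then obtain t where t: "1 + 2 * z - 2 * \<rho> = of_real t" "t \<le> 0" by (rule nonpos_Reals_cases)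
  define \<sigma> where "\<sigma> = (1 - t)/4"
  have s14: "\<sigma> \<ge> 1/4" unfolding \<sigma>_def using t by simp
  have "2 * \<rho> = 1 + 2 * z - (1 + 2 * z - 2 * \<rho>)" by simp
  also have "\<dots> = 1 + 2 * z - of_real t" using t(1) by simp
  finally have h2: "2 * \<rho> = 1 + 2 * z - of_real t" .
  have hs: "complex_of_real t = 1 - 4 * of_real \<sigma>" unfolding \<sigma>_def by (simp add: field_simps)
  have "2 * \<rho> = 2 * (2 * of_real \<sigma> + z)" using h2 unfolding hs by (simp add: algebra_simps)
  hence rho: "\<rho> = 2 * of_real \<sigma> + z" by (metis mult_cancel_left zero_neq_numeral)
  have "(2 * of_real \<sigma> + z)^2 = z^2 + 4 * z" using r2 rho by simp
  hence "4 * (z * (1 - of_real \<sigma>)) = 4 * (of_real \<sigma>)^2"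
    by (simp add: power2_eq_square algebra_simps)
  hence zs: "z * (1 - of_real \<sigma>) = (of_real \<sigma>)^2" by (metis mult_cancel_left zero_neq_numeral)
  have zi: "z \<notin> slit" "cmod z < 4" using z Dom_sub by auto
  show False
  proof (cases "\<sigma> = 1")
    case True
    thus False using zs by simp
  next
    case False
    hence ne: "1 - complex_of_real \<sigma> \<noteq> 0" by (metis eq_iff_diff_eq_0 of_real_eq_1_iff)
    have zv: "z = of_real (\<sigma>^2 / (1 - \<sigma>))" using zs ne by (simp add: field_simps)
    show False
    proof (cases "\<sigma> < 1")
      case True
      have "\<sigma>^2 / (1 - \<sigma>) \<ge> 1/12"
      proof -
        have "(4*\<sigma> - 1) * (3*\<sigma>+1) \<ge> 0" using s14 by simp
        hence "12 * \<sigma>^2 \<ge> 1 - \<sigma>" by (simp add: power2_eq_square algebra_simps)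
        thus ?thesis using True by (simp add: field_simps)
      qed
      hence "z \<in> slit" unfolding slit_def using zv by blast
      thus False using zi by simp
    next
      case False
      hence s1: "\<sigma> > 1" using \<open>\<sigma> \<noteq> 1\<close> by simp
      have "\<sigma>^2 / (1 - \<sigma>) \<le> -4"
      proof -
        have "(\<sigma> - 2)^2 \<ge> 0" by simp
        hence "\<sigma>^2 \<ge> 4 * (\<sigma> - 1)" by (simp add: power2_eq_square algebra_simps)
        thus ?thesis using s1 by (simp add: field_simps)
      qed
      moreover have "cmod z = \<bar>\<sigma>^2 / (1 - \<sigma>)\<bar>" by (simp only: zv norm_of_real)
      ultimately have "cmod z \<ge> 4" by linarith
      thus False using zi by simp
    qed
  qed
qed

lemma key_nonpos2:
  assumes z: "z \<in> Dom \<theta>" and r2: "\<rho>^2 = z^2 + 4 * z"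
  shows "1 + 2 * z + 2 * \<rho> \<notin> \<real>\<^sub>\<le>\<^sub>0"
  using key_nonpos[OF z, of "-\<rho>"] r2 by simp

lemma U1_holo: "U1f \<theta> holomorphic_on Dom \<theta>"
proof -
  have ne: "1 + csqrt w \<noteq> 0" for w
  proof
    assume "1 + csqrt w = 0"
    hence "csqrt w = -1" by (simp add: add_eq_0_iff)
    thus False using Re_csqrt[of w] by simp
  qed
  show ?thesis unfolding U1f_def
    by (intro holomorphic_intros RR_holo ne key_nonpos RR_sq) auto
qed

lemma U2_holo: "U2f \<theta> holomorphic_on Dom \<theta>"
proof -
  have ne: "1 + csqrt w \<noteq> 0" for w
  proof
    assume "1 + csqrt w = 0"
    hence "csqrt w = -1" by (simp add: add_eq_0_iff)
    thus False using Re_csqrt[of w] by simp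
  qed
  show ?thesis unfolding U2f_def
    by (intro holomorphic_intros RR_holo ne key_nonpos2 RR_sq) auto
qed

lemma F_pos:
  fixes x :: real
  assumes x: "0 < x" "x < 1/12"
  shows "1 + 2 * x - 2 * sqrt (x^2 + 4 * x) > 0"
proof -
  define q where "q = sqrt(x^2+4 * x)"
  have h0: "0 \<le> x^2+4 * x" using x by (smt (verit) zero_le_power2)
  hence q2: "q^2 = x^2+4 * x" unfolding q_def by simp
  have q0: "q \<ge> 0" unfolding q_def using h0 by simp
  have "(1+2 * x)^2 - (2 * q)^2 = 1 - 12 * x" using q2 by (simp add: power2_eq_square algebra_simps)
  hence "(2 * q)^2 < (1+2 * x)^2" using x by simp
  hence "2 * q < 1+2 * x" using x q0 by (smt (verit) power_mono)
  thus ?thesis unfolding q_def by simp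
qed

lemma U_vals:
  assumes th: "0 < \<theta>" "\<theta> < 2 * pi" and x: "0 < x" "x < 1/12"
  shows "U1f \<theta> (of_real x) = of_real (u1 x)" "U2f \<theta> (of_real x) = of_real (u2 x)"
proof -
  define q where "q = sqrt(x^2+4 * x)"
  have h0: "0 \<le> x^2+4 * x" using x by (smt (verit) zero_le_power2)
  have q0: "q \<ge> 0" unfolding q_def using h0 by simp
  have R: "RR \<theta> (of_real x) = of_real q" unfolding q_def using RR_pos[OF th x(1)] by simp
  have F1: "1 + 2 * x - 2 * q \<ge> 0" using F_pos[OF x] unfolding q_def by simp
  have F2: "1 + 2 * x + 2 * q \<ge> 0" using x q0 by simp
  have "U1f \<theta> (of_real x) = 2 / (1 + csqrt (of_real (1 + 2 * x - 2 * q)))"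
    unfolding U1f_def R by simp
  also have "\<dots> = of_real (2 / (1 + sqrt (1 + 2 * x - 2 * q)))"
    unfolding csqrt_of_real[OF F1] by simp
  also have "\<dots> = of_real (u1 x)" unfolding u1_formula[OF x] q_def ..
  finally show "U1f \<theta> (of_real x) = of_real (u1 x)" .
  have "U2f \<theta> (of_real x) = 2 / (1 + csqrt (of_real (1 + 2 * x + 2 * q)))"
    unfolding U2f_def R by simp
  also have "\<dots> = of_real (2 / (1 + sqrt (1 + 2 * x + 2 * q)))"
    unfolding csqrt_of_real[OF F2] by simp
  also have "\<dots> = of_real (u2 x)" unfolding u2_formula[OF x] q_def ..
  finally show "U2f \<theta> (of_real x) = of_real (u2 x)" .
qed



definition rad :: "real \<Rightarrow> real" where
  "rad \<theta> = min (1/24) (max \<bar>sin \<theta>\<bar> (- cos \<theta>) / 24)"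

lemma rad_pos:
  assumes th: "0 < \<theta>" "\<theta> < 2 * pi"
  shows "rad \<theta> > 0"
proof -
  have "max \<bar>sin \<theta>\<bar> (- cos \<theta>) > 0"
  proof (rule ccontr)
    assume "\<not> max \<bar>sin \<theta>\<bar> (- cos \<theta>) > 0"
    hence s: "sin \<theta> = 0" and c: "cos \<theta> \<ge> 0" by auto
    have "(sin \<theta>)^2 + (cos \<theta>)^2 = 1" by simp
    hence "cos \<theta> = 1" using s c by (simp add: power2_eq_1_iff)
    then obtain n :: int where n: "\<theta> = of_int n * 2 * pi" using cos_one_2pi_int by blast
    hence "0 < of_int n * 2 * pi" "of_int n * 2 * pi < 2 * pi" using th by auto
    hence "0 < n" "n < 1" by (auto simp: zero_less_mult_iff mult_less_cancel_right2)
    thus False by simp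
  qed
  thus ?thesis unfolding rad_def by simp
qed

lemma rad_le: "rad \<theta> \<le> 1/24" unfolding rad_def by simp

lemma ball_ray:
  assumes th: "0 < \<theta>" "\<theta> < 2 * pi" and z: "z \<in> ball (1/12) (rad \<theta>)"
  shows "z \<notin> ray \<theta>"
proof
  assume "z \<in> ray \<theta>"
  then obtain t where t: "t \<ge> 0" "z = of_real t * cis \<theta>" unfolding ray_def by blast
  have d: "cmod (1/12 - z) < rad \<theta>" using z by (simp add: dist_norm)
  have Rez: "Re (1/12 - z) = 1/12 - t * cos \<theta>" and Imz: "Im (1/12 - z) = - t * sin \<theta>" using t by simp_all
  show False
  proof (cases "t * cos \<theta> \<le> 1/24")
    case True
    hence "Re (1/12 - z) \<ge> 1/24" using Rez by simp
    hence "cmod (1/12 - z) \<ge> 1/24" using abs_Re_le_cmod[of "1/12 - z"] by linarith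
    thus False using d rad_le[of \<theta>] by linarith
  next
    case False
    have c1: "cos \<theta> \<le> 1" by simp
    have "t * cos \<theta> \<le> t" using t(1) c1 by (simp add: mult_left_le)
    hence t24: "t \<ge> 1/24" using False by linarith
    have cp: "cos \<theta> > 0"
    proof (rule ccontr)
      assume "\<not> cos \<theta> > 0"
      hence "cos \<theta> \<le> 0" by simp
      hence "t * cos \<theta> \<le> 0" using t(1) mult_nonneg_nonpos by blast
      thus False using False by linarith
    qed
    hence "max \<bar>sin \<theta>\<bar> (- cos \<theta>) = \<bar>sin \<theta>\<bar>" by simp
    hence r: "rad \<theta> \<le> \<bar>sin \<theta>\<bar> / 24" unfolding rad_def by simp
    have "\<bar>Im (1/12 - z)\<bar> = t * \<bar>sin \<theta>\<bar>" using Imz t(1) by (simp add: abs_mult)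
    also have "\<dots> \<ge> 1/24 * \<bar>sin \<theta>\<bar>" using t24 by (intro mult_right_mono) auto
    finally have "cmod (1/12 - z) \<ge> \<bar>sin \<theta>\<bar> / 24" using abs_Im_le_cmod[of "1/12 - z"] by linarith
    thus False using d r by linarith
  qed
qed

definition Tset :: "real \<Rightarrow> complex set" where
  "Tset \<theta> = ball (1/12) (rad \<theta>) - slit"

lemma ball_Re: "z \<in> ball (1/12) (rad \<theta>) \<Longrightarrow> Re z > 0"
proof -
  assume z: "z \<in> ball (1/12) (rad \<theta>)"
  have "cmod (1/12 - z) < 1/24" using z rad_le[of \<theta>] by (simp add: dist_norm)
  hence "\<bar>Re (1/12 - z)\<bar> < 1/24" using abs_Re_le_cmod[of "1/12 - z"] by linarith
  moreover have "Re (1/12 - z) = 1/12 - Re z" by simp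
  ultimately show "Re z > 0" by linarith
qed

lemma ball_norm: "z \<in> ball (1/12) (rad \<theta>) \<Longrightarrow> cmod z < 4"
proof -
  assume z: "z \<in> ball (1/12) (rad \<theta>)"
  have "cmod (1/12 - z) < 1/24" using z rad_le[of \<theta>] by (simp add: dist_norm)
  moreover have "cmod z \<le> cmod (1/12::complex) + cmod (z - 1/12)"
    by (rule norm_triangle_sub)
  moreover have "cmod (z - 1/12) = cmod (1/12 - z)" by (rule norm_minus_commute)
  ultimately show ?thesis by simp
qed

lemma T_sub:
  assumes th: "0 < \<theta>" "\<theta> < 2 * pi"
  shows "Tset \<theta> \<subseteq> Dom \<theta>"
proof
  fix z assume z: "z \<in> Tset \<theta>"
  hence zb: "z \<in> ball (1/12) (rad \<theta>)" and zs: "z \<notin> slit" unfolding Tset_def by auto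
  have "z \<notin> ray \<theta>" using ball_ray[OF th zb] .
  moreover have "z \<in> ball 0 4" using ball_norm[OF zb] by simp
  ultimately show "z \<in> Dom \<theta>" unfolding Dom_eq using zs by simp
qed

lemma T_conn:
  assumes th: "0 < \<theta>" "\<theta> < 2 * pi"
  shows "connected (Tset \<theta>)"
proof (rule starlike_imp_connected)
  define a where "a = complex_of_real (1/12 - rad \<theta> / 2)"
  have rp: "rad \<theta> > 0" using rad_pos[OF th] .
  have aball: "a \<in> ball (1/12) (rad \<theta>)" unfolding a_def using rp
    by (simp add: dist_norm norm_minus_commute)
  have aslit: "a \<notin> slit"
  proof
    assume "a \<in> slit"
    then obtain t where t: "t \<ge> 1/12" "a = of_real t" unfolding slit_def by blast
    hence "1/12 - rad \<theta> / 2 = t" unfolding a_def by (metis of_real_eq_iff)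
    thus False using t rp by linarith
  qed
  have "\<forall>x\<in>Tset \<theta>. closed_segment a x \<subseteq> Tset \<theta>"
  proof
    fix x assume x: "x \<in> Tset \<theta>"
    show "closed_segment a x \<subseteq> Tset \<theta>"
    proof
      fix y assume y: "y \<in> closed_segment a x"
      have xb: "x \<in> ball (1/12) (rad \<theta>)" using x unfolding Tset_def by simp
      have "closed_segment a x \<subseteq> ball (1/12) (rad \<theta>)"
        by (rule closed_segment_subset[OF aball xb convex_ball])
      hence yb: "y \<in> ball (1/12) (rad \<theta>)" using y by blast
      obtain u where u: "0 \<le> u" "u \<le> 1" "y = (1 - u) *\<^sub>R a + u *\<^sub>R x"
        using y unfolding closed_segment_def by blast
      have "y \<notin> slit"
      proof
        assume "y \<in> slit"
        then obtain t where tt: "t \<ge> 1/12" "y = of_real t" unfolding slit_def by blast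
        have "Im y = u * Im x" unfolding u(3) a_def by simp
        hence Imy: "u * Im x = 0" using tt by simp
        have "Re y = (1 - u) * (1/12 - rad \<theta> / 2) + u * Re x" unfolding u(3) a_def by simp
        hence Rey: "(1 - u) * (1/12 - rad \<theta> / 2) + u * Re x = t" using tt by simp
        show False
        proof (cases "u = 0")
          case True
          thus False using Rey tt rp by simp
        next
          case False
          hence "Im x = 0" using Imy by simp
          hence xr: "x = of_real (Re x)" by (simp add: complex_eq_iff)
          have xs: "x \<notin> slit" using x unfolding Tset_def by simp
          have "Re x < 1/12"
          proof (rule ccontr)
            assume "\<not> Re x < 1/12"
            hence "x \<in> slit" unfolding slit_def using xr by force
            thus False using xs by simp
          qed
          hence "u * Re x \<le> u * (1/12)" using u by (intro mult_left_mono) auto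
          moreover have "(1 - u) * (1/12 - rad \<theta> / 2) \<le> (1 - u) * (1/12)" using u rp by (intro mult_left_mono) auto
          moreover have "u * Re x < u * (1/12) \<or> (1 - u) * (1/12 - rad \<theta> / 2) < (1 - u) * (1/12)"
          proof (cases "u = 1")
            case True
            thus ?thesis using \<open>Re x < 1/12\<close> by simp
          next
            case False
            hence "1 - u > 0" using u by simp
            thus ?thesis using rp by simp
          qed
          moreover have "(1 - u) * (1/12) + u * (1/12) = (1/12::real)" by (simp add: field_simps)
          ultimately show False using Rey tt by linarith
        qed
      qed
      thus "y \<in> Tset \<theta>" using yb unfolding Tset_def by simp
    qed
  qed
  moreover have "a \<in> Tset \<theta>" using aball aslit unfolding Tset_def by simp
  ultimately show "starlike (Tset \<theta>)" unfolding starlike_def by blast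
qed

lemma sign_lemma:
  fixes f g :: "complex \<Rightarrow> complex"
  assumes S: "connected S" and cf: "continuous_on S f" and cg: "continuous_on S g"
    and sq: "\<And>z. z \<in> S \<Longrightarrow> (f z)^2 = (g z)^2" and nz: "\<And>z. z \<in> S \<Longrightarrow> g z \<noteq> 0"
    and a: "a \<in> S" "f a = g a" and z: "z \<in> S"
  shows "f z = g z"
proof -
  define h where "h = (\<lambda>z. f z / g z)"
  have ch: "continuous_on S h" unfolding h_def using cf cg nz by (intro continuous_intros) auto
  have "h ` S \<subseteq> {1, -1}"
  proof
    fix y assume "y \<in> h ` S"
    then obtain w where w: "w \<in> S" "y = h w" by blast
    have "(h w)^2 = 1" unfolding h_def using sq[OF w(1)] nz[OF w(1)] by (simp add: power_divide)
    thus "y \<in> {1, -1}" using w by (simp add: power2_eq_1_iff)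
  qed
  hence "finite (h ` S)" by (rule finite_subset) simp
  then have "h constant_on S" using continuous_finite_range_constant[OF S ch] by blast
  then obtain c where c: "\<And>w. w \<in> S \<Longrightarrow> h w = c" unfolding constant_on_def by blast
  have "h a = 1" unfolding h_def using a nz[OF a(1)] by simp
  hence "h z = 1" using c[OF a(1)] c[OF z] by simp
  thus ?thesis unfolding h_def using nz[OF z] by simp
qed

definition R0 :: "complex \<Rightarrow> complex" where "R0 z = csqrt (z^2 + 4 * z)"

lemma R0_nonpos: "Re z > 0 \<Longrightarrow> z^2 + 4 * z \<notin> \<real>\<^sub>\<le>\<^sub>0"
proof
  assume z: "Re z > 0" and "z^2 + 4 * z \<in> \<real>\<^sub>\<le>\<^sub>0"
  hence i: "Im (z^2 + 4 * z) = 0" and r: "Re (z^2 + 4 * z) \<le> 0" by (auto simp: complex_nonpos_Reals_iff)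
  have "Im (z^2 + 4 * z) = 2 * Im z * (Re z + 2)" by (simp add: power2_eq_square algebra_simps)
  hence "Im z = 0" using i z by simp
  hence "Re (z^2 + 4 * z) = (Re z)^2 + 4 * Re z" by (simp add: power2_eq_square)
  thus False using r z zero_le_power2[of "Re z"] by linarith
qed

lemma R0_holo: "R0 holomorphic_on {z. Re z > 0}"
proof -
  have h: "(\<lambda>z. z^2 + 4 * z) holomorphic_on {z. Re z > 0}" by (intro holomorphic_intros)
  have "\<And>z. z \<in> {z. Re z > 0} \<Longrightarrow> z^2 + 4 * z \<notin> \<real>\<^sub>\<le>\<^sub>0" using R0_nonpos by blast
  from holomorphic_on_csqrt'[OF h this] show ?thesis unfolding R0_def .
qed



lemma a_in_T:
  assumes th: "0 < \<theta>" "\<theta> < 2 * pi"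
  shows "complex_of_real (1/12 - rad \<theta> / 2) \<in> Tset \<theta>"
proof -
  define a where "a = complex_of_real (1/12 - rad \<theta> / 2)"
  have rp: "rad \<theta> > 0" using rad_pos[OF th] .
  have aball: "a \<in> ball (1/12) (rad \<theta>)" unfolding a_def using rp
    by (simp add: dist_norm norm_minus_commute)
  have aslit: "a \<notin> slit"
  proof
    assume "a \<in> slit"
    then obtain t where t: "t \<ge> 1/12" "a = of_real t" unfolding slit_def by blast
    hence "1/12 - rad \<theta> / 2 = t" unfolding a_def by (metis of_real_eq_iff)
    thus False using t rp by linarith
  qed
  show ?thesis using aball aslit unfolding Tset_def a_def by simp
qed

lemma a_range:
  assumes th: "0 < \<theta>" "\<theta> < 2 * pi"
  shows "0 < 1/12 - rad \<theta> / 2" "1/12 - rad \<theta> / 2 < 1/12"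
  using rad_pos[OF th] rad_le[of \<theta>] by auto

lemma T_Re: "z \<in> Tset \<theta> \<Longrightarrow> Re z > 0"
  unfolding Tset_def using ball_Re by blast

lemma R0_sq: "(R0 z)^2 = z^2 + 4 * z"
  unfolding R0_def by simp

lemma RR_eq_R0:
  assumes th: "0 < \<theta>" "\<theta> < 2 * pi" and z: "z \<in> Tset \<theta>"
  shows "RR \<theta> z = R0 z"
proof (rule sign_lemma[OF T_conn[OF th] _ _ _ _ a_in_T[OF th] _ z])
  show "continuous_on (Tset \<theta>) (RR \<theta>)"
    using holomorphic_on_imp_continuous_on[OF holomorphic_on_subset[OF RR_holo T_sub[OF th]]] .
  have "Tset \<theta> \<subseteq> {z. Re z > 0}" using T_Re by blast
  thus "continuous_on (Tset \<theta>) R0"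
    using holomorphic_on_imp_continuous_on[OF holomorphic_on_subset[OF R0_holo]] by blast
  show "\<And>z. z \<in> Tset \<theta> \<Longrightarrow> (RR \<theta> z)^2 = (R0 z)^2" by (simp add: RR_sq R0_sq)
  show "\<And>z. z \<in> Tset \<theta> \<Longrightarrow> R0 z \<noteq> 0"
  proof
    fix w assume w: "w \<in> Tset \<theta>" and "R0 w = 0"
    hence "w^2 + 4 * w = 0" unfolding R0_def by simp
    hence "w^2 + 4 * w \<in> \<real>\<^sub>\<le>\<^sub>0" by simp
    thus False using R0_nonpos T_Re[OF w] by blast
  qed
  define a where "a = 1/12 - rad \<theta> / 2"
  have a: "0 < a" "a < 1/12" unfolding a_def using a_range[OF th] by auto
  have h0: "0 \<le> a^2 + 4 * a" using a by simp
  have "RR \<theta> (of_real a) = of_real (sqrt (a^2 + 4 * a))" using RR_pos[OF th a(1)] .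
  also have "\<dots> = csqrt (of_real (a^2 + 4 * a))" using csqrt_of_real[OF h0] by simp
  also have "\<dots> = R0 (of_real a)" unfolding R0_def by simp
  finally show "RR \<theta> (of_real (1/12 - rad \<theta> / 2)) = R0 (of_real (1/12 - rad \<theta> / 2))" unfolding a_def .
qed

lemma w_nonpos: "z \<notin> slit \<Longrightarrow> 1 - 12 * z \<notin> \<real>\<^sub>\<le>\<^sub>0"
proof
  assume z: "z \<notin> slit" and "1 - 12 * z \<in> \<real>\<^sub>\<le>\<^sub>0"
  then obtain t where t: "1 - 12 * z = of_real t" "t \<le> 0" by (auto elim: nonpos_Reals_cases)
  have "z = (1 - (1 - 12 * z)) / 12" by simp
  also have "\<dots> = of_real ((1 - t)/12)" unfolding t(1) by simp
  finally have zz: "z = of_real ((1 - t)/12)" .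
  have "(1 - t)/12 \<ge> 1/12" using t(2) by simp
  hence "z \<in> slit" unfolding slit_def using zz by blast
  thus False using z by simp
qed

lemma AB_eq:
  assumes th: "0 < \<theta>" "\<theta> < 2 * pi" and z: "z \<in> Tset \<theta>"
  shows "csqrt (1 + 2 * z - 2 * R0 z) * csqrt (1 + 2 * z + 2 * R0 z) = csqrt (1 - 12 * z)"
proof (rule sign_lemma[OF T_conn[OF th] _ _ _ _ a_in_T[OF th] _ z])
  have TR: "Tset \<theta> \<subseteq> {z. Re z > 0}" using T_Re by blast
  have R0h: "R0 holomorphic_on Tset \<theta>" using holomorphic_on_subset[OF R0_holo TR] .
  have TD: "\<And>w. w \<in> Tset \<theta> \<Longrightarrow> w \<in> Dom \<theta>" using T_sub[OF th] by blast
  have h1: "(\<lambda>w. csqrt (1 + 2 * w - 2 * R0 w)) holomorphic_on Tset \<theta>"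
    apply (rule holomorphic_on_csqrt')
     apply (intro holomorphic_intros R0h)
    apply (rule key_nonpos[OF TD R0_sq], assumption)
    done
  have h2: "(\<lambda>w. csqrt (1 + 2 * w + 2 * R0 w)) holomorphic_on Tset \<theta>"
    apply (rule holomorphic_on_csqrt')
     apply (intro holomorphic_intros R0h)
    apply (rule key_nonpos2[OF TD R0_sq], assumption)
    done
  show "continuous_on (Tset \<theta>) (\<lambda>w. csqrt (1 + 2 * w - 2 * R0 w) * csqrt (1 + 2 * w + 2 * R0 w))"
    using holomorphic_on_imp_continuous_on[OF holomorphic_on_mult[OF h1 h2]] .
  have h3: "(\<lambda>w. csqrt (1 - 12 * w)) holomorphic_on Tset \<theta>"
    apply (rule holomorphic_on_csqrt')
     apply (intro holomorphic_intros)
    apply (rule w_nonpos)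
    apply (simp add: Tset_def)
    done
  show "continuous_on (Tset \<theta>) (\<lambda>w. csqrt (1 - 12 * w))"
    using holomorphic_on_imp_continuous_on[OF h3] .
  show "(csqrt (1 + 2 * w - 2 * R0 w) * csqrt (1 + 2 * w + 2 * R0 w))^2 = (csqrt (1 - 12 * w))^2"
    if "w \<in> Tset \<theta>" for w
  proof -
    have "(csqrt (1 + 2 * w - 2 * R0 w) * csqrt (1 + 2 * w + 2 * R0 w))^2
        = (1 + 2 * w - 2 * R0 w) * (1 + 2 * w + 2 * R0 w)" by (simp add: power_mult_distrib)
    also have "\<dots> = (1 + 2 * w)^2 - 4 * (R0 w)^2" by (simp add: power2_eq_square algebra_simps)
    also have "\<dots> = 1 - 12 * w" unfolding R0_sq by (simp add: power2_eq_square algebra_simps)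
    finally show ?thesis by simp
  qed
  show "csqrt (1 - 12 * w) \<noteq> 0" if "w \<in> Tset \<theta>" for w
  proof
    assume "csqrt (1 - 12 * w) = 0"
    hence "1 - 12 * w = 0" by simp
    hence "1 - 12 * w \<in> \<real>\<^sub>\<le>\<^sub>0" by simp
    thus False using w_nonpos[of w] that unfolding Tset_def by blast
  qed
  define a where "a = 1/12 - rad \<theta> / 2"
  have a: "0 < a" "a < 1/12" unfolding a_def using a_range[OF th] by auto
  define q where "q = sqrt (a^2 + 4 * a)"
  have h0: "0 \<le> a^2 + 4 * a" using a by simp
  have q2: "q^2 = a^2 + 4 * a" unfolding q_def using h0 by simp
  have q0: "q \<ge> 0" unfolding q_def using h0 by simp
  have R: "R0 (of_real a) = of_real q"
    unfolding R0_def q_def using csqrt_of_real[OF h0] by simp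
  have F1: "1 + 2 * a - 2 * q \<ge> 0" using F_pos[OF a] unfolding q_def by simp
  have F2: "1 + 2 * a + 2 * q \<ge> 0" using a q0 by simp
  have F3: "1 - 12 * a \<ge> 0" using a by simp
  have "(1 + 2 * a - 2 * q) * (1 + 2 * a + 2 * q) = 1 - 12 * a"
    using q2 by (simp add: power2_eq_square algebra_simps)
  hence "sqrt (1 + 2 * a - 2 * q) * sqrt (1 + 2 * a + 2 * q) = sqrt (1 - 12 * a)"
    by (metis real_sqrt_mult)
  hence "csqrt (of_real (1 + 2 * a - 2 * q)) * csqrt (of_real (1 + 2 * a + 2 * q)) = csqrt (of_real (1 - 12 * a))"
    unfolding csqrt_of_real[OF F1] csqrt_of_real[OF F2] csqrt_of_real[OF F3] by (metis of_real_mult)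
  thus "csqrt (1 + 2 * of_real (1/12 - rad \<theta> / 2) - 2 * R0 (of_real (1/12 - rad \<theta> / 2))) *
        csqrt (1 + 2 * of_real (1/12 - rad \<theta> / 2) + 2 * R0 (of_real (1/12 - rad \<theta> / 2))) =
        csqrt (1 - 12 * of_real (1/12 - rad \<theta> / 2))"
    unfolding a_def[symmetric] R by simp
qed

lemma g_val: "2 / (1 + csqrt (1 + 2 * (1/12) + 2 * R0 (1/12))) = (-3 + complex_of_real (sqrt 21)) / 2"
proof -
  have "R0 (1/12) = csqrt (49/144)" unfolding R0_def by (simp add: power2_eq_square)
  also have "\<dots> = 7/12" by (rule csqrt_unique) (simp_all add: power2_eq_square)
  finally have R: "R0 (1/12) = 7/12" .
  have E: "1 + 2 * (1/12) + 2 * R0 (1/12) = complex_of_real (7/3)" unfolding R by simp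
  have "csqrt (1 + 2 * (1/12) + 2 * R0 (1/12)) = csqrt (complex_of_real (7/3))" by (simp only: E)
  also have "\<dots> = of_real (sqrt (7/3))" by (rule csqrt_of_real) simp
  finally have "csqrt (1 + 2 * (1/12) + 2 * R0 (1/12)) = of_real (sqrt (7/3))" .
  hence e: "2 / (1 + csqrt (1 + 2 * (1/12) + 2 * R0 (1/12))) = of_real (2 / (1 + sqrt (7/3)))" by simp
  define s where "s = sqrt (7/3)"
  have s2: "s^2 = 7/3" unfolding s_def by simp
  have s0: "s \<ge> 0" unfolding s_def by simp
  have "sqrt 21 = sqrt (9 * (7/3))" by simp
  also have "\<dots> = 3 * s" unfolding s_def real_sqrt_mult by simp
  finally have s21: "sqrt 21 = 3 * s" .
  have "2 / (1 + s) = (-3 + 3 * s) / 2"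
    using s0 s2 by (simp add: field_simps power2_eq_square)
  hence "2 / (1 + sqrt (7/3)) = (-3 + sqrt 21) / 2" unfolding s21 s_def .
  hence "complex_of_real (2 / (1 + sqrt (7/3))) = complex_of_real ((-3 + sqrt 21) / 2)" by (simp only:)
  also have "\<dots> = (-3 + complex_of_real (sqrt 21)) / 2" by simp
  finally show ?thesis unfolding e .
qed

lemma one_csqrt_ne: "1 + csqrt w \<noteq> 0"
proof
  assume "1 + csqrt w = 0"
  hence "csqrt w = -1" by (simp add: add_eq_0_iff)
  thus False using Re_csqrt[of w] by simp
qed

lemma sqrt_12_7: "sqrt (12/7) = 2 * sqrt (3/7)"
proof -
  have "sqrt (12/7) = sqrt (4 * (3/7))" by simp
  also have "\<dots> = 2 * sqrt (3/7)" unfolding real_sqrt_mult by simp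
  finally show ?thesis .
qed

theorem lemma4p8:
  fixes \<theta> :: real
  assumes "0 < \<theta>" and "\<theta> < 2 * pi"
  shows "\<exists>U1 U2.
     U1 holomorphic_on Dom \<theta> \<and> U2 holomorphic_on Dom \<theta> \<and>
     (\<forall>x\<in>{0<..<1/12}. U1 (complex_of_real x) = complex_of_real (u1 x)
                      \<and> U2 (complex_of_real x) = complex_of_real (u2 x)) \<and>
     (\<exists>r>0. \<exists>g. g holomorphic_on ball (1/12) r \<and>
                (\<forall>z\<in>ball (1/12) r \<inter> Dom \<theta>. U2 z = g z) \<and>
                g (1/12) = (-3 + complex_of_real (sqrt 21)) / 2) \<and>
     (\<lambda>z. U1 z - (2 - complex_of_real (sqrt (12/7)) * csqrt (1 - 12 * z)))
        \<in> O[at (1/12) within Dom \<theta>](\<lambda>z. 1 - 12 * z)"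
proof -
  note th = assms
  have P3: "\<forall>x\<in>{0<..<1/12}. U1f \<theta> (complex_of_real x) = complex_of_real (u1 x)
                      \<and> U2f \<theta> (complex_of_real x) = complex_of_real (u2 x)"
    using U_vals[OF th] by auto
  define g where "g = (\<lambda>z. 2 / (1 + csqrt (1 + 2 * z + 2 * R0 z)))"
  have bR: "ball (1/12) (rad \<theta>) \<subseteq> {z. Re z > 0}" using ball_Re by blast
  have hR: "R0 holomorphic_on ball (1/12) (rad \<theta>)" using holomorphic_on_subset[OF R0_holo bR] .
  have inner: "1 + 2 * z + 2 * R0 z \<notin> \<real>\<^sub>\<le>\<^sub>0" if "z \<in> ball (1/12) (rad \<theta>)" for z
  proof -
    have "Re z > 0" using ball_Re[OF that] .
    moreover have "Re (R0 z) \<ge> 0" unfolding R0_def by (rule Re_csqrt)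
    ultimately have "Re (1 + 2 * z + 2 * R0 z) > 0" by simp
    thus ?thesis by (simp add: complex_nonpos_Reals_iff)
  qed
  have hs: "(\<lambda>z. csqrt (1 + 2 * z + 2 * R0 z)) holomorphic_on ball (1/12) (rad \<theta>)"
    apply (rule holomorphic_on_csqrt')
     apply (intro holomorphic_intros hR)
    apply (rule inner, assumption)
    done
  have gh: "g holomorphic_on ball (1/12) (rad \<theta>)" unfolding g_def
    by (intro holomorphic_intros hs one_csqrt_ne)
  have geq: "\<forall>z\<in>ball (1/12) (rad \<theta>) \<inter> Dom \<theta>. U2f \<theta> z = g z"
  proof
    fix z assume z: "z \<in> ball (1/12) (rad \<theta>) \<inter> Dom \<theta>"
    hence zT: "z \<in> Tset \<theta>" unfolding Tset_def using Dom_sub by blast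
    show "U2f \<theta> z = g z" unfolding U2f_def g_def RR_eq_R0[OF th zT] ..
  qed
  have P4: "\<exists>r>0. \<exists>g. g holomorphic_on ball (1/12) r \<and>
                (\<forall>z\<in>ball (1/12) r \<inter> Dom \<theta>. U2f \<theta> z = g z) \<and>
                g (1/12) = (-3 + complex_of_real (sqrt 21)) / 2"
    using rad_pos[OF th] gh geq g_val unfolding g_def by blast
  have ev: "eventually (\<lambda>z. norm (U1f \<theta> z - (2 - complex_of_real (sqrt (12/7)) * csqrt (1 - 12 * z)))
             \<le> 4 * norm (1 - 12 * z)) (at (1/12) within Dom \<theta>)"
    unfolding eventually_at
  proof (intro exI conjI ballI impI)
    show "rad \<theta> > 0" using rad_pos[OF th] .
    fix z assume zD: "z \<in> Dom \<theta>" and zd: "z \<noteq> 1/12 \<and> dist z (1/12) < rad \<theta>"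
    have zb: "z \<in> ball (1/12) (rad \<theta>)" using zd by (simp add: dist_commute)
    have zT: "z \<in> Tset \<theta>" unfolding Tset_def using zb zD Dom_sub by blast
    define A where "A = csqrt (1 + 2 * z - 2 * R0 z)"
    define B where "B = csqrt (1 + 2 * z + 2 * R0 z)"
    have zc: "cmod (z - 1/12) \<le> 1/24" using zd rad_le[of \<theta>] by (simp add: dist_norm)
    have est: "cmod (2/(1+A) - (2 - 2 * of_real (sqrt (3/7)) * (A * B))) \<le> 4 * cmod (1 - 12 * z)"
    proof -
      have r1: "Re (R0 z) \<ge> 0" unfolding R0_def by (rule Re_csqrt)
      have r2: "Re z \<ge> 0" using ball_Re[OF zb] by simp
      have A2: "A^2 = 1 + 2 * z - 2 * R0 z" unfolding A_def by (rule power2_csqrt)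
      have B2: "B^2 = 1 + 2 * z + 2 * R0 z" unfolding B_def by (rule power2_csqrt)
      have rA: "Re A \<ge> 0" unfolding A_def by (rule Re_csqrt)
      have rB: "Re B \<ge> 0" unfolding B_def by (rule Re_csqrt)
      show ?thesis by (rule est_lemma[OF R0_sq r1 r2 zc A2 B2 rA rB refl])
    qed
    have U: "U1f \<theta> z = 2/(1+A)" unfolding U1f_def A_def RR_eq_R0[OF th zT] ..
    have AB: "A * B = csqrt (1 - 12 * z)" unfolding A_def B_def using AB_eq[OF th zT] .
    have c: "complex_of_real (sqrt (12/7)) = 2 * of_real (sqrt (3/7))" unfolding sqrt_12_7 by simp
    show "norm (U1f \<theta> z - (2 - complex_of_real (sqrt (12/7)) * csqrt (1 - 12 * z))) \<le> 4 * norm (1 - 12 * z)"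
      using est unfolding U c AB[symmetric] by (simp add: mult.assoc)
  qed
  have P5: "(\<lambda>z. U1f \<theta> z - (2 - complex_of_real (sqrt (12/7)) * csqrt (1 - 12 * z)))
        \<in> O[at (1/12) within Dom \<theta>](\<lambda>z. 1 - 12 * z)"
    using ev by (rule bigoI)
  show ?thesis
    apply (rule exI[of _ "U1f \<theta>"], rule exI[of _ "U2f \<theta>"])
    using U1_holo U2_holo P3 P4 P5 by blast
qed

end
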